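(* Let $G:\mathcal P(\mathbb T^d)\to\mathbb R$ be strongly differentiable at $\tilde\mu\in\mathcal P(\mathbb T^d)$ and define $\bar G:\mathcal P_2(\mathbb R^d)\to\mathbb R$ by $\bar G(\mu)=G(\pi_\sharp\mu)$. Then $\bar G$ is strongly differentiable at every $\mu\in\mathcal P_2(\mathbb R^d)$ with $\pi_\sharp\mu=\tilde\mu$. Conversely, if $\bar G:\mathcal P_2(\mathbb R^d)\to\mathbb R$ is of the form $\bar G(\mu)=G(\pi_\sharp\mu)$ for some $G:\mathcal P(\mathbb T^d)\to\mathbb R$ and $\bar G$ is strongly differentiable at $\mu$, then $G$ is strongly differentiable at $\tilde\mu=\pi_\sharp\mu$.
   Context: $\mathbb T^d=\mathbb R^d/\mathbb Z^d$, $\pi:\mathbb R^d\to\mathbb T^d$ the projection. $\mathcal P(\mathbb T^d)$: Borel probability measures on $\mathbb T^d$; $\mathcal P_2(\mathbb R^d)$: Borel probability measures on $\mathbb R^d$ with finite second moment. Let $\alpha(x,v)=x+v$ (on $\mathbb T^d\times\mathbb R^d\to\mathbb T^d$, resp. $\mathbb R^d\times\mathbb R^d\to\mathbb R^d$). For $\tilde\mu,\tilde\nu\in\mathcal P(\mathbb T^d)$, $\Psi(\tilde\mu,\tilde\nu)$ is the set of probability measures $\gamma$ on $\mathbb T^d\times\mathbb R^d$ with finite second moment in $v$, first marginal $\tilde\mu$ and $\alpha_\sharp\gamma=\tilde\nu$; analogously $\Psi(\mu,\nu)$ for $\mu,\nu\in\mathcal P_2(\mathbb R^d)$ (measures on $\mathbb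 R^d\times\mathbb R^d$). A function $G$ on $\mathcal P(\mathbb T^d)$ (resp. $\mathcal P_2(\mathbb R^d)$) is strongly differentiable at $\mu$ if there are $\xi\in L^2_\mu(\cdot,\mathbb R^d)$ and $k>0$ such that $\big|G(\nu)-G(\mu)-\int\langle\xi(x),v\rangle\,d\gamma(x,v)\big|\le k\int|v|^2\,d\gamma(x,v)$ for all $\nu$ and all $\gamma\in\Psi(\mu,\nu)$. *)

theory Defs
  imports "HOL-Probability.Probability"
begin

text \<open>Model of the torus: T^d is identified with the fundamental domain [0,1)^d in R^d
  (= real^'n); the projection pi reduces each coordinate mod 1.  Borel probability
  measures on T^d are Borel probability measures on R^d concentrated on [0,1)^d.\<close>

definition tor_proj :: "real^'n \<Rightarrow> real^'n" where
  "tor_proj x = (\<chi> i. frac (x $ i))"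

definition tor_dom :: "(real^'n) set" where
  "tor_dom = {x. \<forall>i. 0 \<le> x $ i \<and> x $ i < 1}"

definition tor_prob :: "(real^'n) measure \<Rightarrow> bool" where
  "tor_prob M \<longleftrightarrow> prob_space M \<and> sets M = sets borel \<and> emeasure M tor_dom = 1"

definition P2 :: "(real^'n) measure \<Rightarrow> bool" where
  "P2 M \<longleftrightarrow> prob_space M \<and> sets M = sets borel \<and> integrable M (\<lambda>x. norm x ^ 2)"

text \<open>Psi on the torus: alpha(x,v) = x + v on T^d, i.e. tor_proj (x + v).\<close>
definition Psi_tor :: "(real^'n) measure \<Rightarrow> (real^'n) measure \<Rightarrow> ((real^'n) \<times> (real^'n)) measure set" where
  "Psi_tor \<mu> \<nu> = {\<gamma>. prob_space \<gamma> \<and> sets \<gamma> = sets borel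
      \<and> integrable \<gamma> (\<lambda>(x,v). norm v ^ 2)
      \<and> distr \<gamma> borel fst = \<mu>
      \<and> distr \<gamma> borel (\<lambda>(x,v). tor_proj (x + v)) = \<nu>}"

definition Psi_R :: "(real^'n) measure \<Rightarrow> (real^'n) measure \<Rightarrow> ((real^'n) \<times> (real^'n)) measure set" where
  "Psi_R \<mu> \<nu> = {\<gamma>. prob_space \<gamma> \<and> sets \<gamma> = sets borel
      \<and> integrable \<gamma> (\<lambda>(x,v). norm v ^ 2)
      \<and> distr \<gamma> borel fst = \<mu>
      \<and> distr \<gamma> borel (\<lambda>(x,v). x + v) = \<nu>}"

definition strongly_diff_tor :: "((real^'n) measure \<Rightarrow> real) \<Rightarrow> (real^'n) measure \<Rightarrow> bool" where
  "strongly_diff_tor G \<mu> \<longleftrightarrow> tor_prob \<mu> \<and>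
     (\<exists>\<xi> k. \<xi> \<in> borel_measurable borel \<and> integrable \<mu> (\<lambda>x. norm (\<xi> x) ^ 2) \<and> k > 0 \<and>
        (\<forall>\<nu> \<gamma>. tor_prob \<nu> \<longrightarrow> \<gamma> \<in> Psi_tor \<mu> \<nu> \<longrightarrow>
           \<bar>G \<nu> - G \<mu> - (\<integral>(x,v). \<xi> x \<bullet> v \<partial>\<gamma>)\<bar> \<le> k * (\<integral>(x,v). norm v ^ 2 \<partial>\<gamma>)))"

definition strongly_diff_R :: "((real^'n) measure \<Rightarrow> real) \<Rightarrow> (real^'n) measure \<Rightarrow> bool" where
  "strongly_diff_R G \<mu> \<longleftrightarrow> P2 \<mu> \<and>
     (\<exists>\<xi> k. \<xi> \<in> borel_measurable borel \<and> integrable \<mu> (\<lambda>x. norm (\<xi> x) ^ 2) \<and> k > 0 \<and>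
        (\<forall>\<nu> \<gamma>. P2 \<nu> \<longrightarrow> \<gamma> \<in> Psi_R \<mu> \<nu> \<longrightarrow>
           \<bar>G \<nu> - G \<mu> - (\<integral>(x,v). \<xi> x \<bullet> v \<partial>\<gamma>)\<bar> \<le> k * (\<integral>(x,v). norm v ^ 2 \<partial>\<gamma>)))"

end

theory Submission
  imports Defs "HOL-Library.Countable"
begin


lemma vec_meas:
  fixes f :: "'a \<Rightarrow> real^'n"
  assumes "\<And>i. (\<lambda>x. f x $ i) \<in> borel_measurable M"
  shows "f \<in> borel_measurable M"
proof (subst borel_measurable_euclidean_space, intro ballI)
  fix b :: "real^'n" assume "b \<in> Basis"
  then obtain i u where "b = axis i u" "u \<in> Basis" by (auto simp: Basis_vec_def)
  then show "(\<lambda>x. f x \<bullet> b) \<in> borel_measurable M" using assms[of i] by (simp add: inner_axis)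
qed

lemma nth_meas[measurable]: "(\<lambda>x::real^'n. x $ i) \<in> borel_measurable borel"
  by (rule borel_measurable_continuous_onI) (intro continuous_intros)

lemma tp_meas[measurable]: "tor_proj \<in> borel_measurable borel"
proof (rule vec_meas)
  fix i
  have "(\<lambda>x::real^'a. tor_proj x $ i) = (\<lambda>x. x $ i - real_of_int \<lfloor>x $ i\<rfloor>)"
    by (auto simp: tor_proj_def frac_def)
  also have "\<dots> \<in> borel_measurable borel" by measurable
  finally show "(\<lambda>x::real^'a. tor_proj x $ i) \<in> borel_measurable borel" .
qed

lemma tp_idem: "tor_proj (tor_proj x + v) = tor_proj (x + v)"
  by (simp add: tor_proj_def vec_eq_iff frac_add_simps)

lemma tp_dom: "tor_proj x \<in> tor_dom"
  by (simp add: tor_proj_def tor_dom_def frac_lt_1)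

lemma tor_dom_sets: "tor_dom \<in> sets (borel :: (real^'n) measure)"
proof -
  have "tor_dom = {x \<in> space (borel :: (real^'n) measure). \<forall>i. 0 \<le> x $ i \<and> x $ i < 1}"
    by (simp add: tor_dom_def)
  also have "\<dots> \<in> sets borel" by measurable
  finally show ?thesis .
qed

lemma tor_prob_distr:
  assumes "prob_space M" "sets M = sets borel"
  shows "tor_prob (distr M borel tor_proj)"
proof -
  have m: "tor_proj \<in> M \<rightarrow>\<^sub>M borel" unfolding measurable_cong_sets[OF assms(2) refl] by measurable
  have "emeasure (distr M borel tor_proj) tor_dom = emeasure M (tor_proj -` tor_dom \<inter> space M)"
    by (rule emeasure_distr[OF m tor_dom_sets])
  also have "tor_proj -` tor_dom \<inter> space M = space M" using tp_dom by blast
  also have "emeasure M (space M) = 1" using assms(1) prob_space.emeasure_space_1 by blast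
  finally show ?thesis unfolding tor_prob_def
    using prob_space.prob_space_distr[OF assms(1) m] by simp
qed

lemma prodT_meas[measurable]: "(\<lambda>(x,v). (tor_proj x, v)) \<in> borel \<rightarrow>\<^sub>M (borel :: ((real^'n) \<times> (real^'n)) measure)"
  unfolding borel_prod[symmetric] by measurable

lemma inner_meas[measurable]:
  assumes [measurable]: "\<xi> \<in> borel_measurable borel"
  shows "(\<lambda>(x,v). \<xi> x \<bullet> (v::real^'n)) \<in> borel_measurable (borel :: ((real^'n) \<times> (real^'n)) measure)"
  unfolding borel_prod[symmetric] by measurable

lemma add_meas[measurable]: "(\<lambda>(x,v). x + v) \<in> borel \<rightarrow>\<^sub>M (borel :: (real^'n) measure)"
  by (rule borel_measurable_continuous_onI) (simp add: case_prod_unfold continuous_on_add continuous_on_fst continuous_on_snd continuous_on_id)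

lemma norm2_meas[measurable]: "(\<lambda>(x,v). norm (v::real^'n) ^ 2) \<in> borel_measurable (borel :: ((real^'n) \<times> (real^'n)) measure)"
  unfolding borel_prod[symmetric] by measurable


lemma fst_meas[measurable]: "fst \<in> (borel :: ((real^'n) \<times> (real^'n)) measure) \<rightarrow>\<^sub>M borel"
  unfolding borel_prod[symmetric] by measurable

lemma tpadd_meas[measurable]: "(\<lambda>(x,v). tor_proj (x + v)) \<in> (borel :: ((real^'n) \<times> (real^'n)) measure) \<rightarrow>\<^sub>M borel"
  using measurable_comp[OF add_meas tp_meas] by (simp add: o_def case_prod_unfold)

lemma part1:
  fixes G :: "(real^'n) measure \<Rightarrow> real"
  assumes sd: "strongly_diff_tor G \<mu>t" and P: "P2 \<mu>" and eq: "distr \<mu> borel tor_proj = \<mu>t"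
  shows "strongly_diff_R (\<lambda>m. G (distr m borel tor_proj)) \<mu>"
proof -
  from sd have "\<exists>\<xi> k. \<xi> \<in> borel_measurable borel \<and> integrable \<mu>t (\<lambda>x. norm (\<xi> x) ^ 2) \<and> k > 0 \<and>
        (\<forall>\<nu> \<gamma>. tor_prob \<nu> \<longrightarrow> \<gamma> \<in> Psi_tor \<mu>t \<nu> \<longrightarrow>
           \<bar>G \<nu> - G \<mu>t - (\<integral>(x,v). \<xi> x \<bullet> v \<partial>\<gamma>)\<bar> \<le> k * (\<integral>(x,v). norm v ^ 2 \<partial>\<gamma>))"
    unfolding strongly_diff_tor_def by (rule conjunct2)
  then obtain \<xi> k where \<xi>m[measurable]: "\<xi> \<in> borel_measurable borel"
    and \<xi>i: "integrable \<mu>t (\<lambda>x. norm (\<xi> x) ^ 2)" and k: "k > 0"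
    and H0: "\<forall>\<nu> \<gamma>. tor_prob \<nu> \<longrightarrow> \<gamma> \<in> Psi_tor \<mu>t \<nu> \<longrightarrow>
           \<bar>G \<nu> - G \<mu>t - (\<integral>(x,v). \<xi> x \<bullet> v \<partial>\<gamma>)\<bar> \<le> k * (\<integral>(x,v). norm v ^ 2 \<partial>\<gamma>)"
    by (elim exE conjE)
  note H = H0[rule_format]
  have sM: "sets \<mu> = sets borel" and psM: "prob_space \<mu>" using P unfolding P2_def by blast+
  have tpM: "tor_proj \<in> \<mu> \<rightarrow>\<^sub>M borel" unfolding measurable_cong_sets[OF sM refl] by measurable
  have int1: "integrable \<mu> (\<lambda>x. norm (\<xi> (tor_proj x)) ^ 2)"
  proof -
    have "(\<lambda>x. norm (\<xi> x) ^ 2) \<in> borel_measurable borel" by measurable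
    from integrable_distr_eq[OF tpM this] \<xi>i show ?thesis unfolding eq by simp
  qed
  have B: "\<bar>G (distr \<nu> borel tor_proj) - G (distr \<mu> borel tor_proj) - (\<integral>(x,v). \<xi> (tor_proj x) \<bullet> v \<partial>\<gamma>)\<bar>
      \<le> k * (\<integral>(x,v). norm v ^ 2 \<partial>\<gamma>)" if P\<nu>: "P2 \<nu>" and g: "\<gamma> \<in> Psi_R \<mu> \<nu>" for \<nu> \<gamma>
  proof -
    have psg: "prob_space \<gamma>" and sg: "sets \<gamma> = sets borel" and ig: "integrable \<gamma> (\<lambda>(x,v). norm v ^ 2)"
      and fg: "distr \<gamma> borel fst = \<mu>" and ag: "distr \<gamma> borel (\<lambda>(x,v). x + v) = \<nu>"
      using g unfolding Psi_R_def by blast+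
    have s\<nu>: "sets \<nu> = sets borel" and ps\<nu>: "prob_space \<nu>" using P\<nu> unfolding P2_def by blast+
    define T :: "(real^'n) \<times> (real^'n) \<Rightarrow> (real^'n) \<times> (real^'n)" where "T = (\<lambda>(x,v). (tor_proj x, v))"
    have Tm: "T \<in> \<gamma> \<rightarrow>\<^sub>M borel" unfolding T_def measurable_cong_sets[OF sg refl] by measurable
    have fstm: "fst \<in> \<gamma> \<rightarrow>\<^sub>M (borel :: (real^'n) measure)"
      unfolding measurable_cong_sets[OF sg refl] borel_prod[symmetric] by measurable
    have addm: "(\<lambda>(x,v). x + v) \<in> \<gamma> \<rightarrow>\<^sub>M (borel :: (real^'n) measure)"
      unfolding measurable_cong_sets[OF sg refl] by measurable
    define \<gamma>' where "\<gamma>' = distr \<gamma> borel T"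
    have "\<gamma>' \<in> Psi_tor \<mu>t (distr \<nu> borel tor_proj)"
      unfolding Psi_tor_def mem_Collect_eq
    proof (intro conjI)
      show "prob_space \<gamma>'" unfolding \<gamma>'_def by (rule prob_space.prob_space_distr[OF psg Tm])
      show "sets \<gamma>' = sets borel" unfolding \<gamma>'_def by simp
      show "integrable \<gamma>' (\<lambda>(x,v). norm v ^ 2)" unfolding \<gamma>'_def
        by (subst integrable_distr_eq[OF Tm]) (use ig norm2_meas in \<open>auto simp: T_def case_prod_unfold\<close>)
      have "distr \<gamma>' borel fst = distr \<gamma> borel (fst \<circ> T)"
        unfolding \<gamma>'_def by (rule distr_distr[OF _ Tm]) measurable
      also have "fst \<circ> T = tor_proj \<circ> fst" by (auto simp: T_def)
      also have "distr \<gamma> borel (tor_proj \<circ> fst) = distr (distr \<gamma> borel fst) borel tor_proj"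
        by (rule distr_distr[symmetric, OF tp_meas fstm])
      finally show "distr \<gamma>' borel fst = \<mu>t" using fg eq by simp
      have "distr \<gamma>' borel (\<lambda>(x,v). tor_proj (x + v)) = distr \<gamma> borel ((\<lambda>(x,v). tor_proj (x + v)) \<circ> T)"
        unfolding \<gamma>'_def by (rule distr_distr[OF _ Tm]) measurable
      also have "(\<lambda>(x,v). tor_proj (x + v)) \<circ> T = tor_proj \<circ> (\<lambda>(x,v). x + v)"
        by (auto simp: T_def tp_idem)
      also have "distr \<gamma> borel (tor_proj \<circ> (\<lambda>(x,v). x + v)) = distr (distr \<gamma> borel (\<lambda>(x,v). x + v)) borel tor_proj"
        by (rule distr_distr[symmetric, OF tp_meas addm])
      finally show "distr \<gamma>' borel (\<lambda>(x,v). tor_proj (x + v)) = distr \<nu> borel tor_proj" using ag by simp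
    qed
    from H[OF tor_prob_distr[OF ps\<nu> s\<nu>] this]
    have "\<bar>G (distr \<nu> borel tor_proj) - G \<mu>t - (\<integral>(x,v). \<xi> x \<bullet> v \<partial>\<gamma>')\<bar> \<le> k * (\<integral>(x,v). norm v ^ 2 \<partial>\<gamma>')" .
    moreover have "(\<integral>(x,v). \<xi> x \<bullet> v \<partial>\<gamma>') = (\<integral>(x,v). \<xi> (tor_proj x) \<bullet> v \<partial>\<gamma>)"
      unfolding \<gamma>'_def by (subst integral_distr[OF Tm inner_meas[OF \<xi>m]]) (simp add: T_def case_prod_unfold)
    moreover have "(\<integral>(x,v). norm v ^ 2 \<partial>\<gamma>') = (\<integral>(x,v). norm v ^ 2 \<partial>\<gamma>)"
      unfolding \<gamma>'_def by (subst integral_distr[OF Tm norm2_meas]) (simp add: T_def case_prod_unfold)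
    ultimately show ?thesis using eq by simp
  qed
  have m: "(\<lambda>x. \<xi> (tor_proj x)) \<in> borel_measurable borel" by measurable
  show ?thesis unfolding strongly_diff_R_def
    apply (rule conjI[OF P])
    apply (rule exI[of _ "\<lambda>x. \<xi> (tor_proj x)"])
    apply (rule exI[of _ k])
    apply (intro conjI allI impI m int1 k)
    apply (erule B)
    apply assumption
    done
qed



definition zv :: "('n::finite \<Rightarrow> int) \<Rightarrow> real^'n" where "zv z = (\<chi> i. real_of_int (z i))"
definition fl :: "real^'n \<Rightarrow> ('n \<Rightarrow> int)" where "fl x = (\<lambda>i. \<lfloor>x $ i\<rfloor>)"
definition cellz :: "('n::finite \<Rightarrow> int) \<Rightarrow> (real^'n) set" where "cellz z = {x. fl x = z}"

lemma decomp: "tor_proj x + zv (fl x) = x"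
  by (simp add: tor_proj_def zv_def fl_def vec_eq_iff frac_def)

lemma cell_eq: "x \<in> cellz z \<Longrightarrow> tor_proj x + zv z = x"
  using decomp by (auto simp: cellz_def)

lemma tp_shift: "tor_proj (y + zv z + v) = tor_proj (y + v)"
proof -
  have "frac (y $ i + real_of_int (z i) + v $ i) = frac (y $ i + v $ i)" for i
  proof -
    have "y $ i + real_of_int (z i) + v $ i = (y $ i + v $ i) + real_of_int (z i)" by simp
    then show ?thesis by (simp only: frac_add_of_int_right)
  qed
  then show ?thesis by (simp add: tor_proj_def zv_def vec_eq_iff)
qed

lemma shift_meas[measurable]: "(\<lambda>y. y + zv z) \<in> borel_measurable borel"
  by (rule borel_measurable_continuous_onI) (intro continuous_intros)

lemma cell_sets[measurable]: "cellz z \<in> sets (borel :: (real^'n) measure)"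
proof -
  have "cellz z = {x \<in> space (borel :: (real^'n) measure). \<forall>i. real_of_int (z i) \<le> x $ i \<and> x $ i < real_of_int (z i) + 1}"
    by (auto simp: cellz_def fl_def floor_eq_iff)
  also have "\<dots> \<in> sets borel" by measurable
  finally show ?thesis .
qed

lemma ind_cell: "indicator (cellz z) x = (indicator {fl x} z :: ennreal)"
  by (auto simp: cellz_def indicator_def)

lemma sum_cell: "(\<integral>\<^sup>+z. indicator (cellz z) x \<partial>count_space UNIV) = (1::ennreal)"
  by (simp add: ind_cell)

lemma swap_count:
  fixes f :: "'z::countable \<Rightarrow> 'a \<Rightarrow> ennreal"
  assumes sf: "sigma_finite_measure M" and m: "\<And>z. f z \<in> borel_measurable M"
  shows "(\<integral>\<^sup>+y. \<integral>\<^sup>+z. f z y \<partial>count_space UNIV \<partial>M) = (\<integral>\<^sup>+z. \<integral>\<^sup>+y. f z y \<partial>M \<partial>count_space UNIV)"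
proof -
  interpret pair_sigma_finite "count_space (UNIV :: 'z set)" M
    by (intro pair_sigma_finite.intro sigma_finite_measure_count_space_countable sf countableI_type)
  have mm: "(\<lambda>(z,y). f z y) \<in> borel_measurable (count_space UNIV \<Otimes>\<^sub>M M)"
    by (rule measurable_pair_measure_countable1) (auto simp: m intro!: countableI_type)
  show ?thesis using nn_integral_snd[OF mm] M2.nn_integral_fst[OF mm] by simp
qed

lemma meas_count:
  fixes f :: "'z::countable \<Rightarrow> 'a \<Rightarrow> ennreal"
  assumes m: "\<And>z. f z \<in> borel_measurable M"
  shows "(\<lambda>y. \<integral>\<^sup>+z. f z y \<partial>count_space UNIV) \<in> borel_measurable M"
proof -
  have "(\<lambda>(y,z). f z y) \<in> borel_measurable (M \<Otimes>\<^sub>M count_space UNIV)"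
    by (subst measurable_pair_swap_iff) (rule measurable_pair_measure_countable1, auto simp: m intro!: countableI_type)
  from sigma_finite_measure.borel_measurable_nn_integral[OF sigma_finite_measure_count_space_countable[OF countableI_type] this]
  show ?thesis by simp
qed

lemma meas_count_L:
  fixes f :: "'z::countable \<Rightarrow> 'a \<Rightarrow> 'b::{banach, second_countable_topology}"
  assumes m: "\<And>z. f z \<in> borel_measurable M"
  shows "(\<lambda>y. \<integral>z. f z y \<partial>count_space UNIV) \<in> borel_measurable M"
proof -
  have "(\<lambda>(y,z). f z y) \<in> borel_measurable (M \<Otimes>\<^sub>M count_space UNIV)"
    by (subst measurable_pair_swap_iff) (rule measurable_pair_measure_countable1, auto simp: m intro!: countableI_type)
  from sigma_finite_measure.borel_measurable_lebesgue_integral[OF sigma_finite_measure_count_space_countable[OF countableI_type] this]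
  show ?thesis by simp
qed

lemma ennreal_le_1_sq: "(x::ennreal) \<le> 1 + x ^ 2"
proof (cases "x \<le> 1")
  case True then show ?thesis by (meson add_increasing2 order_trans zero_le)
next
  case False
  then have "x * 1 \<le> x * x" by (intro mult_left_mono) auto
  then have "x \<le> x ^ 2" by (simp add: power2_eq_square)
  then show ?thesis by (meson add_increasing order_trans zero_le)
qed

lemma two_ab: "2 * (a * ennreal p) \<le> a ^ 2 + (ennreal p) ^ 2" if "p \<ge> 0" for a :: ennreal
proof (cases a)
  case (real r)
  have "0 \<le> (r - p)^2" by simp
  also have "\<dots> = r^2 + p^2 - 2 * (r * p)" by (simp add: power2_diff mult.assoc)
  finally have "2 * (r * p) \<le> r^2 + p^2" by simp
  then have le: "2 * (r * p) \<le> r^2 + p^2" .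
  have "2 * (a * ennreal p) = ennreal (2 * (r * p))" using real that by (simp add: ennreal_mult)
  also have "\<dots> \<le> ennreal (r^2 + p^2)" using le by (rule ennreal_leI)
  also have "\<dots> = a^2 + ennreal p ^ 2" using real that by (simp add: ennreal_power ennreal_plus)
  finally show ?thesis .
next
  case top then show ?thesis by simp
qed


lemma jensen_nn:
  assumes wm: "w \<in> borel_measurable N" and am: "a \<in> borel_measurable N" and s: "(\<integral>\<^sup>+z. w z \<partial>N) = 1"
  shows "(\<integral>\<^sup>+z. w z * a z \<partial>N)^2 \<le> (\<integral>\<^sup>+z. w z * a z ^ 2 \<partial>N)"
proof -
  define P where "P = (\<integral>\<^sup>+z. w z * a z \<partial>N)"
  define Q where "Q = (\<integral>\<^sup>+z. w z * a z ^ 2 \<partial>N)"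
  have "P \<le> (\<integral>\<^sup>+z. w z * (1 + a z ^ 2) \<partial>N)" unfolding P_def
    by (intro nn_integral_mono mult_left_mono ennreal_le_1_sq) auto
  also have "\<dots> = (\<integral>\<^sup>+z. w z + w z * a z ^ 2 \<partial>N)" by (simp add: distrib_left)
  also have "\<dots> = 1 + Q" unfolding Q_def using wm am by (subst nn_integral_add) (auto simp: s)
  finally have PQ: "P \<le> 1 + Q" .
  show ?thesis
  proof (cases "Q = \<top>")
    case True then show ?thesis by (simp add: Q_def[symmetric] P_def[symmetric])
  next
    case False
    then have "P \<noteq> \<top>" using PQ by (auto simp: top_unique)
    then obtain p where p: "P = ennreal p" "0 \<le> p" by (cases P) auto
    have "P^2 = (\<integral>\<^sup>+z. w z * a z \<partial>N) * ennreal p" by (simp add: power2_eq_square p(1)[symmetric] P_def)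
    also have "\<dots> = (\<integral>\<^sup>+z. w z * a z * ennreal p \<partial>N)" using wm am by (subst nn_integral_multc) auto
    finally have "2 * P^2 = 2 * (\<integral>\<^sup>+z. w z * a z * ennreal p \<partial>N)" by simp
    also have "\<dots> = (\<integral>\<^sup>+z. w z * (2 * (a z * ennreal p)) \<partial>N)"
      using wm am by (subst nn_integral_cmult[symmetric]) (auto simp: ac_simps)
    also have "\<dots> \<le> (\<integral>\<^sup>+z. w z * (a z ^ 2 + ennreal p ^ 2) \<partial>N)"
      by (intro nn_integral_mono mult_left_mono two_ab p(2)) auto
    also have "\<dots> = (\<integral>\<^sup>+z. w z * a z ^ 2 + w z * ennreal p ^ 2 \<partial>N)" by (simp add: distrib_left)
    also have "\<dots> = Q + (\<integral>\<^sup>+z. w z * ennreal p ^ 2 \<partial>N)" unfolding Q_def using wm am by (subst nn_integral_add) auto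
    also have "(\<integral>\<^sup>+z. w z * ennreal p ^ 2 \<partial>N) = P^2" using wm by (subst nn_integral_multc) (auto simp: s p(1))
    finally have le2: "P^2 + P^2 \<le> Q + P^2" by (simp add: mult_2)
    have "P^2 = ennreal (p^2)" by (simp only: p(1) ennreal_power[OF p(2)])
    then have fin: "P^2 \<noteq> \<top>" by simp
    from le2 have "P^2 + P^2 \<le> P^2 + Q" by (simp only: add.commute)
    with fin have "P^2 \<le> Q" by (simp only: ennreal_add_left_cancel_le) simp
    then show ?thesis by (simp add: P_def Q_def)
  qed
qed




lemma emeasure_distr_nn:
  assumes f: "f \<in> M \<rightarrow>\<^sub>M N" and A: "A \<in> sets N"
  shows "emeasure (distr M N f) A = (\<integral>\<^sup>+x. indicator A (f x) \<partial>M)"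
proof -
  have "emeasure (distr M N f) A = integral\<^sup>N (distr M N f) (indicator A)"
    by (rule nn_integral_indicator[symmetric]) (simp add: A)
  also have "\<dots> = (\<integral>\<^sup>+x. indicator A (f x) \<partial>M)"
    by (rule nn_integral_distr[OF f]) (simp add: A borel_measurable_indicator)
  finally show ?thesis .
qed

lemma sq_sum_le: "(norm ((x::real^'n) + v))^2 \<le> 2 * (norm x)^2 + 2 * (norm v)^2"
proof -
  have "norm (x + v) \<le> norm x + norm v" by (rule norm_triangle_ineq)
  then have "(norm (x + v))^2 \<le> (norm x + norm v)^2" by (rule power_mono) simp
  also have "\<dots> \<le> 2 * (norm x)^2 + 2 * (norm v)^2"
  proof -
    have z: "0 \<le> (norm x - norm v)^2" by simp
    have e: "(norm x - norm v)^2 = (norm x)^2 + (norm v)^2 - 2 * (norm x * norm v)" by (simp add: power2_diff mult.assoc)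
    have e2: "(norm x + norm v)^2 = (norm x)^2 + (norm v)^2 + 2 * (norm x * norm v)" by (simp add: power2_sum mult.assoc)
    show ?thesis using z e e2 by linarith
  qed
  finally show ?thesis .
qed

lemma inner_le_sq: "\<bar>(a::real^'n) \<bullet> b\<bar> \<le> (norm a)^2 + (norm b)^2"
proof -
  have "\<bar>a \<bullet> b\<bar> \<le> norm a * norm b" by (rule Cauchy_Schwarz_ineq2)
  also have "\<dots> \<le> (norm a)^2 + (norm b)^2"
  proof -
    have z: "0 \<le> (norm a - norm b)^2" by simp
    have e: "(norm a - norm b)^2 = (norm a)^2 + (norm b)^2 - 2 * (norm a * norm b)" by (simp add: power2_diff mult.assoc)
    have "0 \<le> norm a * norm b" by simp
    then show ?thesis using z e by linarith
  qed
  finally show ?thesis .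
qed

context
  fixes \<mu> :: "(real^'n) measure"
  assumes P: "P2 \<mu>"
begin

definition "mt = distr \<mu> borel tor_proj"
definition "nuz z = distr (density \<mu> (indicator (cellz z))) borel tor_proj"
definition "F0 z = RN_deriv mt (nuz z)"
definition "S0 y = (\<integral>\<^sup>+z. F0 z y \<partial>count_space UNIV)"
definition "W z y = (if S0 y = 1 then F0 z y else indicator {\<lambda>_. 0} z)"

lemma sM: "sets \<mu> = sets borel" and psM: "prob_space \<mu>" using P unfolding P2_def by blast+

lemma smt: "sets mt = sets borel" unfolding mt_def by simp

lemma tpM[measurable]: "tor_proj \<in> \<mu> \<rightarrow>\<^sub>M borel" unfolding measurable_cong_sets[OF sM refl] by measurable

lemma psmt: "prob_space mt" unfolding mt_def by (rule prob_space.prob_space_distr[OF psM tpM])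

lemma sfmt: "sigma_finite_measure mt"
  using psmt by (simp add: prob_space_imp_sigma_finite)

lemma sf\<mu>: "sigma_finite_measure \<mu>"
  using psM by (simp add: prob_space_imp_sigma_finite)

lemma nuz_sets: "sets (nuz z) = sets borel" unfolding nuz_def by simp

lemma indM[measurable]: "indicator (cellz z) \<in> borel_measurable \<mu>"
  unfolding measurable_cong_sets[OF sM refl] by measurable

lemma nuz_ac: "absolutely_continuous mt (nuz z)"
  unfolding absolutely_continuous_def
proof
  fix A assume A: "A \<in> null_sets mt"
  then have As: "A \<in> sets borel" and A0: "emeasure mt A = 0" using smt by auto
  have tpD: "tor_proj \<in> density \<mu> (indicator (cellz z)) \<rightarrow>\<^sub>M borel"
    unfolding measurable_cong_sets[OF sets_density refl] by (rule tpM)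
  have pre: "tor_proj -` A \<inter> space \<mu> \<in> sets \<mu>" using As tpM by (rule measurable_sets[rotated])
  have "emeasure (nuz z) A = emeasure (density \<mu> (indicator (cellz z))) (tor_proj -` A \<inter> space \<mu>)"
    unfolding nuz_def by (subst emeasure_distr[OF tpD As]) simp
  also have "\<dots> = (\<integral>\<^sup>+x. indicator (cellz z) x * indicator (tor_proj -` A \<inter> space \<mu>) x \<partial>\<mu>)"
    by (rule emeasure_density[OF indM pre])
  also have "\<dots> \<le> (\<integral>\<^sup>+x. indicator (tor_proj -` A \<inter> space \<mu>) x \<partial>\<mu>)"
    by (intro nn_integral_mono) (auto simp: indicator_def)
  also have "\<dots> = emeasure \<mu> (tor_proj -` A \<inter> space \<mu>)" using pre by simp
  also have "\<dots> = emeasure mt A" unfolding mt_def by (rule emeasure_distr[symmetric, OF tpM As])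
  finally have "emeasure (nuz z) A = 0" using A0 by simp
  then show "A \<in> null_sets (nuz z)" using As nuz_sets by auto
qed

lemma dens: "density mt (F0 z) = nuz z"
  unfolding F0_def by (rule sigma_finite_measure.density_RN_deriv[OF sfmt nuz_ac]) (simp add: nuz_sets smt)

lemma F0_meas[measurable]: "F0 z \<in> borel_measurable borel"
  using borel_measurable_RN_deriv[of mt "nuz z"] unfolding F0_def measurable_cong_sets[OF smt refl] .

lemma keyA:
  assumes \<phi>[measurable]: "\<phi> \<in> borel_measurable borel"
  shows "(\<integral>\<^sup>+y. F0 z y * \<phi> y \<partial>mt) = (\<integral>\<^sup>+x. indicator (cellz z) x * \<phi> (tor_proj x) \<partial>\<mu>)"
proof -
  have tpD: "tor_proj \<in> density \<mu> (indicator (cellz z)) \<rightarrow>\<^sub>M borel"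
    unfolding measurable_cong_sets[OF sets_density refl] by (rule tpM)
  have "(\<integral>\<^sup>+y. F0 z y * \<phi> y \<partial>mt) = integral\<^sup>N (density mt (F0 z)) \<phi>"
    by (rule nn_integral_density[symmetric]) (simp_all add: measurable_cong_sets[OF smt refl])
  also have "\<dots> = integral\<^sup>N (nuz z) \<phi>" by (simp add: dens)
  also have "\<dots> = (\<integral>\<^sup>+x. \<phi> (tor_proj x) \<partial>density \<mu> (indicator (cellz z)))"
    unfolding nuz_def by (rule nn_integral_distr[OF tpD]) simp
  also have "\<dots> = (\<integral>\<^sup>+x. indicator (cellz z) x * \<phi> (tor_proj x) \<partial>\<mu>)"
    by (rule nn_integral_density) (simp_all add: measurable_cong_sets[OF sM refl])
  finally show ?thesis .
qed


lemma S0_meas[measurable]: "S0 \<in> borel_measurable borel"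
  unfolding S0_def by (rule meas_count) simp

lemma keyB0:
  assumes g[measurable]: "g \<in> borel_measurable borel" and h[measurable]: "h \<in> borel_measurable borel"
  shows "(\<integral>\<^sup>+y. (\<integral>\<^sup>+z. F0 z y * g (y + zv z) \<partial>count_space UNIV) * h y \<partial>mt) = (\<integral>\<^sup>+x. g x * h (tor_proj x) \<partial>\<mu>)"
proof -
  have "(\<integral>\<^sup>+y. (\<integral>\<^sup>+z. F0 z y * g (y + zv z) \<partial>count_space UNIV) * h y \<partial>mt)
      = (\<integral>\<^sup>+y. \<integral>\<^sup>+z. F0 z y * (g (y + zv z) * h y) \<partial>count_space UNIV \<partial>mt)"
    by (intro nn_integral_cong) (simp add: nn_integral_multc[symmetric] mult.assoc)
  also have "\<dots> = (\<integral>\<^sup>+z. \<integral>\<^sup>+y. F0 z y * (g (y + zv z) * h y) \<partial>mt \<partial>count_space UNIV)"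
    by (rule swap_count[OF sfmt]) (simp add: measurable_cong_sets[OF smt refl])
  also have "\<dots> = (\<integral>\<^sup>+z. \<integral>\<^sup>+x. indicator (cellz z) x * (g (tor_proj x + zv z) * h (tor_proj x)) \<partial>\<mu> \<partial>count_space UNIV)"
    by (intro nn_integral_cong keyA) simp
  also have "\<dots> = (\<integral>\<^sup>+z. \<integral>\<^sup>+x. indicator (cellz z) x * (g x * h (tor_proj x)) \<partial>\<mu> \<partial>count_space UNIV)"
    by (intro nn_integral_cong) (auto simp: indicator_def cell_eq)
  also have "\<dots> = (\<integral>\<^sup>+x. \<integral>\<^sup>+z. indicator (cellz z) x * (g x * h (tor_proj x)) \<partial>count_space UNIV \<partial>\<mu>)"
    by (rule swap_count[OF sf\<mu>, symmetric]) (simp add: measurable_cong_sets[OF sM refl])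
  also have "\<dots> = (\<integral>\<^sup>+x. g x * h (tor_proj x) \<partial>\<mu>)"
    by (intro nn_integral_cong) (simp add: nn_integral_multc sum_cell)
  finally show ?thesis .
qed

lemma S0_ae: "AE y in mt. S0 y = 1"
proof -
  have "AE y in mt. S0 y = (\<lambda>_. 1) y"
  proof (rule sigma_finite_measure.density_unique2[OF sfmt])
    show "S0 \<in> borel_measurable mt" unfolding measurable_cong_sets[OF smt refl] by simp
    show "(\<lambda>_. 1) \<in> borel_measurable mt" by simp
    fix A assume A: "A \<in> sets mt"
    then have As[measurable]: "A \<in> sets borel" using smt by simp
    have "(\<integral>\<^sup>+y. S0 y * indicator A y \<partial>mt) = (\<integral>\<^sup>+y. (\<integral>\<^sup>+z. F0 z y * 1 \<partial>count_space UNIV) * indicator A y \<partial>mt)"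
      by (simp add: S0_def)
    also have "\<dots> = (\<integral>\<^sup>+x. 1 * indicator A (tor_proj x) \<partial>\<mu>)"
      using keyB0[of "\<lambda>_. 1" "indicator A"] by simp
    also have "\<dots> = (\<integral>\<^sup>+y. 1 * indicator A y \<partial>mt)"
      unfolding mt_def by (rule nn_integral_distr[symmetric, OF tpM]) simp
    finally show "(\<integral>\<^sup>+y. S0 y * indicator A y \<partial>mt) = (\<integral>\<^sup>+y. 1 * indicator A y \<partial>mt)" .
  qed
  then show ?thesis by simp
qed

lemma W_sum: "(\<integral>\<^sup>+z. W z y \<partial>count_space UNIV) = 1"
  by (cases "S0 y = 1") (simp_all add: W_def S0_def)

lemma W_ae: "AE y in mt. \<forall>z. W z y = F0 z y"
  using S0_ae by eventually_elim (simp add: W_def)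

lemma W_meas[measurable]: "W z \<in> borel_measurable borel"
proof -
  have "{y. S0 y = 1} \<in> sets borel"
  proof -
    have "{y. S0 y = 1} = S0 -` {1} \<inter> space borel" by auto
    also have "\<dots> \<in> sets borel" by (rule measurable_sets[OF S0_meas]) simp
    finally show ?thesis .
  qed
  then show ?thesis unfolding W_def by measurable
qed

lemma W_le1: "W z y \<le> 1"
proof -
  have "W z y = (\<integral>\<^sup>+z'. W z' y * indicator {z} z' \<partial>count_space UNIV)" by simp
  also have "\<dots> \<le> (\<integral>\<^sup>+z'. W z' y \<partial>count_space UNIV)"
    by (intro nn_integral_mono) (simp add: indicator_def)
  finally show ?thesis by (simp add: W_sum)
qed

definition "K a y = (\<integral>\<^sup>+z. W z y * a (y + zv z) \<partial>count_space UNIV)"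

lemma K_meas[measurable]: "a \<in> borel_measurable borel \<Longrightarrow> K a \<in> borel_measurable borel"
  unfolding K_def by (rule meas_count) simp

lemma keyB:
  assumes g[measurable]: "g \<in> borel_measurable borel" and h[measurable]: "h \<in> borel_measurable borel"
  shows "(\<integral>\<^sup>+y. K g y * h y \<partial>mt) = (\<integral>\<^sup>+x. g x * h (tor_proj x) \<partial>\<mu>)"
proof -
  have "(\<integral>\<^sup>+y. K g y * h y \<partial>mt) = (\<integral>\<^sup>+y. (\<integral>\<^sup>+z. F0 z y * g (y + zv z) \<partial>count_space UNIV) * h y \<partial>mt)"
  proof (rule nn_integral_cong_AE)
    show "AE y in mt. K g y * h y = (\<integral>\<^sup>+z. F0 z y * g (y + zv z) \<partial>count_space UNIV) * h y"
      using W_ae by eventually_elim (simp add: K_def)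
  qed
  also have "\<dots> = (\<integral>\<^sup>+x. g x * h (tor_proj x) \<partial>\<mu>)" by (rule keyB0) simp_all
  finally show ?thesis .
qed


definition "Wr z y = enn2real (W z y)"

lemma W_eq: "W z y = ennreal (Wr z y)"
proof -
  have "W z y \<noteq> \<top>" using W_le1[of z y] by (auto simp: top_unique)
  then show ?thesis unfolding Wr_def by (cases "W z y") auto
qed

lemma Wr_meas[measurable]: "Wr z \<in> borel_measurable borel" unfolding Wr_def by measurable

lemma Wr_nonneg: "0 \<le> Wr z y" unfolding Wr_def by simp

definition xi' :: "(real^'n \<Rightarrow> real^'n) \<Rightarrow> real^'n \<Rightarrow> real^'n" where "xi' \<xi> y = (\<integral>z. Wr z y *\<^sub>R \<xi> (y + zv z) \<partial>count_space UNIV)"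

lemma xi'_meas:
  fixes \<xi> :: "real^'n \<Rightarrow> real^'n"
  assumes [measurable]: "\<xi> \<in> borel_measurable borel"
  shows "xi' \<xi> \<in> borel_measurable borel"
proof -
  have m: "(\<lambda>y. Wr z y *\<^sub>R \<xi> (y + zv z)) \<in> borel_measurable borel" for z by measurable
  show ?thesis unfolding xi'_def using meas_count_L[of "\<lambda>z y. Wr z y *\<^sub>R \<xi> (y + zv z)", OF m] by simp
qed

lemma norm_Wr: "ennreal (norm (Wr z y *\<^sub>R (a::real^'n))) = W z y * ennreal (norm a)"
  by (simp add: W_eq Wr_nonneg ennreal_mult)

lemma fin_norm:
  fixes \<xi> :: "real^'n \<Rightarrow> real^'n"
  assumes \<xi>m[measurable]: "\<xi> \<in> borel_measurable borel" and i\<xi>: "integrable \<mu> (\<lambda>x. norm (\<xi> x) ^ 2)"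
  shows "(\<integral>\<^sup>+x. ennreal (norm (\<xi> x)) \<partial>\<mu>) < \<infinity>" "(\<integral>\<^sup>+x. ennreal (norm (\<xi> x)) ^ 2 \<partial>\<mu>) < \<infinity>"
proof -
  have sq: "(\<integral>\<^sup>+x. ennreal (norm (\<xi> x)) ^ 2 \<partial>\<mu>) = (\<integral>\<^sup>+x. ennreal (norm (\<xi> x) ^ 2) \<partial>\<mu>)"
    by (simp add: ennreal_power)
  also have "\<dots> < \<infinity>" using integrableD(2)[OF i\<xi>] by (simp add: top.not_eq_extremum)
  finally show 2: "(\<integral>\<^sup>+x. ennreal (norm (\<xi> x)) ^ 2 \<partial>\<mu>) < \<infinity>" .
  have "(\<integral>\<^sup>+x. ennreal (norm (\<xi> x)) \<partial>\<mu>) \<le> (\<integral>\<^sup>+x. 1 + ennreal (norm (\<xi> x)) ^ 2 \<partial>\<mu>)"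
    by (intro nn_integral_mono ennreal_le_1_sq)
  also have "\<dots> = (\<integral>\<^sup>+x. 1 \<partial>\<mu>) + (\<integral>\<^sup>+x. ennreal (norm (\<xi> x)) ^ 2 \<partial>\<mu>)"
    by (rule nn_integral_add) (simp_all add: measurable_cong_sets[OF sM refl])
  also have "\<dots> < \<infinity>" using 2 prob_space.emeasure_space_1[OF psM] by (simp add: nn_integral_const)
  finally show "(\<integral>\<^sup>+x. ennreal (norm (\<xi> x)) \<partial>\<mu>) < \<infinity>" .
qed

lemma AE_int:
  fixes \<xi> :: "real^'n \<Rightarrow> real^'n"
  assumes \<xi>m[measurable]: "\<xi> \<in> borel_measurable borel" and i\<xi>: "integrable \<mu> (\<lambda>x. norm (\<xi> x) ^ 2)"
  shows "AE y in mt. integrable (count_space UNIV) (\<lambda>z. Wr z y *\<^sub>R \<xi> (y + zv z))"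
proof -
  define n where "n x = ennreal (norm (\<xi> x))" for x
  have nm[measurable]: "n \<in> borel_measurable borel" unfolding n_def by measurable
  have "(\<integral>\<^sup>+y. K n y * 1 \<partial>mt) = (\<integral>\<^sup>+x. n x * 1 \<partial>\<mu>)" by (rule keyB) simp_all
  also have "\<dots> < \<infinity>" using fin_norm(1)[OF \<xi>m i\<xi>] by (simp add: n_def)
  finally have "(\<integral>\<^sup>+y. K n y \<partial>mt) \<noteq> \<infinity>" by simp
  then have "AE y in mt. K n y \<noteq> \<infinity>"
    by (intro nn_integral_noteq_infinite) (simp_all add: measurable_cong_sets[OF smt refl])
  then show ?thesis
  proof eventually_elim
    case (elim y)
    show ?case
    proof (rule integrableI_bounded)
      show "(\<lambda>z. Wr z y *\<^sub>R \<xi> (y + zv z)) \<in> borel_measurable (count_space UNIV)" by simp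
      have "(\<integral>\<^sup>+z. ennreal (norm (Wr z y *\<^sub>R \<xi> (y + zv z))) \<partial>count_space UNIV) = K n y"
        by (simp only: K_def n_def norm_Wr)
      then show "(\<integral>\<^sup>+z. ennreal (norm (Wr z y *\<^sub>R \<xi> (y + zv z))) \<partial>count_space UNIV) < \<infinity>"
        using elim by (simp add: top.not_eq_extremum)
    qed
  qed
qed

lemma xi'_L2:
  fixes \<xi> :: "real^'n \<Rightarrow> real^'n"
  assumes \<xi>m[measurable]: "\<xi> \<in> borel_measurable borel" and i\<xi>: "integrable \<mu> (\<lambda>x. norm (\<xi> x) ^ 2)"
  shows "integrable mt (\<lambda>y. norm (xi' \<xi> y) ^ 2)"
proof (rule integrableI_bounded)
  have [measurable]: "xi' \<xi> \<in> borel_measurable borel" by (rule xi'_meas) simp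
  show "(\<lambda>y. norm (xi' \<xi> y) ^ 2) \<in> borel_measurable mt"
    unfolding measurable_cong_sets[OF smt refl] by measurable
  define n where "n x = ennreal (norm (\<xi> x))" for x
  have nm[measurable]: "n \<in> borel_measurable borel" unfolding n_def by measurable
  have pt: "ennreal (norm (norm (xi' \<xi> y) ^ 2)) \<le> K (\<lambda>x. n x ^ 2) y" for y
  proof -
    have b1: "ennreal (norm (xi' \<xi> y)) \<le> K n y"
    proof (cases "integrable (count_space UNIV) (\<lambda>z. Wr z y *\<^sub>R \<xi> (y + zv z))")
      case True
      have "ennreal (norm (xi' \<xi> y)) \<le> (\<integral>\<^sup>+z. ennreal (norm (Wr z y *\<^sub>R \<xi> (y + zv z))) \<partial>count_space UNIV)"
        unfolding xi'_def by (rule integral_norm_bound_ennreal[OF True])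
      also have "\<dots> = K n y" by (simp only: K_def n_def norm_Wr)
      finally show ?thesis .
    next
      case False
      then show ?thesis by (simp add: xi'_def not_integrable_integral_eq)
    qed
    have "ennreal (norm (norm (xi' \<xi> y) ^ 2)) = ennreal (norm (xi' \<xi> y)) * ennreal (norm (xi' \<xi> y))"
      by (simp add: power2_eq_square ennreal_mult)
    also have "\<dots> \<le> K n y * K n y" using b1 by (intro mult_mono) simp_all
    also have "\<dots> = (\<integral>\<^sup>+z. W z y * n (y + zv z) \<partial>count_space UNIV) ^ 2"
      by (simp add: K_def power2_eq_square)
    also have "\<dots> \<le> (\<integral>\<^sup>+z. W z y * n (y + zv z) ^ 2 \<partial>count_space UNIV)"
      by (rule jensen_nn) (simp_all add: W_sum)
    also have "\<dots> = K (\<lambda>x. n x ^ 2) y" by (simp add: K_def)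
    finally show ?thesis .
  qed
  have "(\<integral>\<^sup>+y. ennreal (norm (norm (xi' \<xi> y) ^ 2)) \<partial>mt) \<le> (\<integral>\<^sup>+y. K (\<lambda>x. n x ^ 2) y * 1 \<partial>mt)"
    using pt by (intro nn_integral_mono) simp
  also have "\<dots> = (\<integral>\<^sup>+x. n x ^ 2 * 1 \<partial>\<mu>)" by (rule keyB) simp_all
  also have "\<dots> < \<infinity>" using fin_norm(2)[OF \<xi>m i\<xi>] by (simp add: n_def)
  finally show "(\<integral>\<^sup>+y. ennreal (norm (norm (xi' \<xi> y) ^ 2)) \<partial>mt) < \<infinity>" .
qed


context
  fixes gt :: "((real^'n) \<times> (real^'n)) measure"
  assumes psg: "prob_space gt" and sg: "sets gt = sets borel" and fg: "distr gt borel fst = mt"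
begin

definition "Gam = density (count_space UNIV \<Otimes>\<^sub>M gt) (\<lambda>(z,w). W z (fst w))"
definition "Phi = (\<lambda>(z::'n\<Rightarrow>int, w::(real^'n)\<times>(real^'n)). (fst w + zv z, snd w))"
definition "gam = distr Gam borel Phi"

lemma sfg: "sigma_finite_measure gt" using psg by (simp add: prob_space_imp_sigma_finite)

lemma PSF: "pair_sigma_finite (count_space (UNIV :: ('n\<Rightarrow>int) set)) gt"
  by (intro pair_sigma_finite.intro sigma_finite_measure_count_space_countable sfg countableI_type)

lemma sGam: "sets Gam = sets (count_space UNIV \<Otimes>\<^sub>M gt)" by (simp add: Gam_def)

lemma shiftP[measurable]: "(\<lambda>w. (fst w + zv z, snd w)) \<in> (borel :: ((real^'n) \<times> (real^'n)) measure) \<rightarrow>\<^sub>M borel"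
  unfolding borel_prod[symmetric] by measurable

lemma Wfst[measurable]: "(\<lambda>w. W z (fst w)) \<in> borel_measurable (borel :: ((real^'n) \<times> (real^'n)) measure)"
  using measurable_comp[OF fst_meas W_meas] by (simp add: o_def)

lemma Wm2: "(\<lambda>(z,w). W z (fst w)) \<in> borel_measurable (count_space UNIV \<Otimes>\<^sub>M gt)"
  by (rule measurable_pair_measure_countable1) (auto intro!: countableI_type simp: measurable_cong_sets[OF sg refl])

lemma PhiP: "Phi \<in> (count_space UNIV \<Otimes>\<^sub>M gt) \<rightarrow>\<^sub>M borel"
  unfolding Phi_def
  by (rule measurable_pair_measure_countable1) (auto intro!: countableI_type simp: measurable_cong_sets[OF sg refl])

lemma PhiM: "Phi \<in> Gam \<rightarrow>\<^sub>M borel"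
  unfolding measurable_cong_sets[OF sGam refl] by (rule PhiP)

lemma fstg: "fst \<in> gt \<rightarrow>\<^sub>M (borel :: (real^'n) measure)"
  unfolding measurable_cong_sets[OF sg refl] by (rule fst_meas)


lemma keyC:
  assumes g: "g \<in> borel_measurable borel"
  shows "integral\<^sup>N gam g = (\<integral>\<^sup>+w. (\<integral>\<^sup>+z. W z (fst w) * g (fst w + zv z, snd w) \<partial>count_space UNIV) \<partial>gt)"
proof -
  have gP: "(\<lambda>p. g (Phi p)) \<in> borel_measurable (count_space UNIV \<Otimes>\<^sub>M gt)"
    using measurable_comp[OF PhiP g] by (simp add: o_def)
  have fm: "(\<lambda>p. (case p of (z,w) \<Rightarrow> W z (fst w)) * g (Phi p)) \<in> borel_measurable (count_space UNIV \<Otimes>\<^sub>M gt)"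
    using Wm2 gP by measurable
  have "integral\<^sup>N gam g = (\<integral>\<^sup>+p. g (Phi p) \<partial>Gam)"
    unfolding gam_def by (rule nn_integral_distr[OF PhiM]) (simp add: g)
  also have "\<dots> = (\<integral>\<^sup>+p. (case p of (z,w) \<Rightarrow> W z (fst w)) * g (Phi p) \<partial>(count_space UNIV \<Otimes>\<^sub>M gt))"
    unfolding Gam_def by (rule nn_integral_density[OF Wm2 gP])
  also have "\<dots> = (\<integral>\<^sup>+w. \<integral>\<^sup>+z. (case (z,w) of (z,w) \<Rightarrow> W z (fst w)) * g (Phi (z,w)) \<partial>count_space UNIV \<partial>gt)"
    by (rule pair_sigma_finite.nn_integral_snd[OF PSF fm, symmetric])
  finally show ?thesis by (simp add: Phi_def)
qed

lemma C1:
  assumes a[measurable]: "a \<in> borel_measurable borel"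
  shows "(\<integral>\<^sup>+p. a (fst p) \<partial>gam) = (\<integral>\<^sup>+x. a x \<partial>\<mu>)"
proof -
  have am: "(\<lambda>p. a (fst p)) \<in> borel_measurable (borel :: ((real^'n) \<times> (real^'n)) measure)"
    using measurable_comp[OF fst_meas a] by (simp add: o_def)
  have "(\<integral>\<^sup>+p. a (fst p) \<partial>gam) = (\<integral>\<^sup>+w. K a (fst w) \<partial>gt)"
    by (simp add: keyC[OF am] K_def)
  also have "\<dots> = (\<integral>\<^sup>+y. K a y \<partial>distr gt borel fst)"
    by (rule nn_integral_distr[symmetric, OF fstg]) simp
  also have "\<dots> = (\<integral>\<^sup>+y. K a y * 1 \<partial>mt)" by (simp add: fg)
  also have "\<dots> = (\<integral>\<^sup>+x. a x * 1 \<partial>\<mu>)" by (rule keyB) simp_all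
  finally show ?thesis by simp
qed

lemma C2:
  assumes g: "g \<in> borel_measurable borel" and c: "c \<in> borel_measurable gt"
    and gc: "\<And>y v z. g (y + zv z, v) = c (y, v)"
  shows "integral\<^sup>N gam g = integral\<^sup>N gt c"
proof -
  have "integral\<^sup>N gam g = (\<integral>\<^sup>+w. (\<integral>\<^sup>+z. W z (fst w) * c w \<partial>count_space UNIV) \<partial>gt)"
    by (simp add: keyC[OF g] gc)
  also have "\<dots> = (\<integral>\<^sup>+w. c w \<partial>gt)"
    by (intro nn_integral_cong) (simp add: nn_integral_multc W_sum)
  finally show ?thesis .
qed


lemma sgam: "sets gam = sets borel" by (simp add: gam_def)

lemma gam_prob: "prob_space gam"
proof (rule prob_spaceI)
  have "emeasure gam (space gam) = integral\<^sup>N gam (\<lambda>_. 1)" by (simp add: nn_integral_const)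
  also have "\<dots> = integral\<^sup>N gt (\<lambda>_. 1)" by (rule C2) simp_all
  also have "\<dots> = 1" using prob_space.emeasure_space_1[OF psg] by (simp add: nn_integral_const)
  finally show "emeasure gam (space gam) = 1" .
qed

lemma fstgam: "fst \<in> gam \<rightarrow>\<^sub>M (borel :: (real^'n) measure)"
  unfolding measurable_cong_sets[OF sgam refl] by (rule fst_meas)

lemma addgam: "(\<lambda>(x,v). x + v) \<in> gam \<rightarrow>\<^sub>M (borel :: (real^'n) measure)"
  unfolding measurable_cong_sets[OF sgam refl] by (rule add_meas)

lemma tpaddgam: "(\<lambda>(x,v). tor_proj (x + v)) \<in> gam \<rightarrow>\<^sub>M (borel :: (real^'n) measure)"
  unfolding measurable_cong_sets[OF sgam refl] by (rule tpadd_meas)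

lemma tpaddg: "(\<lambda>(x,v). tor_proj (x + v)) \<in> gt \<rightarrow>\<^sub>M (borel :: (real^'n) measure)"
  unfolding measurable_cong_sets[OF sg refl] by (rule tpadd_meas)

lemma gam_fst: "distr gam borel fst = \<mu>"
proof (rule measure_eqI)
  show "sets (distr gam borel fst) = sets \<mu>" by (simp add: sM)
  fix A assume "A \<in> sets (distr gam borel fst)"
  then have A[measurable]: "A \<in> sets (borel :: (real^'n) measure)" by simp
  have "emeasure (distr gam borel fst) A = (\<integral>\<^sup>+p. indicator A (fst p) \<partial>gam)"
    by (rule emeasure_distr_nn[OF fstgam A])
  also have "\<dots> = (\<integral>\<^sup>+x. indicator A x \<partial>\<mu>)" by (rule C1) simp
  also have "\<dots> = emeasure \<mu> A" using sM by simp
  finally show "emeasure (distr gam borel fst) A = emeasure \<mu> A" .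
qed

lemma gam_tpadd: "distr (distr gam borel (\<lambda>(x,v). x + v)) borel tor_proj = distr gt borel (\<lambda>(x,v). tor_proj (x + v))"
proof -
  have "distr (distr gam borel (\<lambda>(x,v). x + v)) borel tor_proj = distr gam borel (tor_proj \<circ> (\<lambda>(x,v). x + v))"
    by (rule distr_distr[OF tp_meas addgam])
  also have "tor_proj \<circ> (\<lambda>(x,v). x + v) = (\<lambda>(x,v). tor_proj (x + v))" by auto
  also have "distr gam borel (\<lambda>(x,v). tor_proj (x + v)) = distr gt borel (\<lambda>(x,v). tor_proj (x + v))"
  proof (rule measure_eqI)
    show "sets (distr gam borel (\<lambda>(x,v). tor_proj (x + v))) = sets (distr gt borel (\<lambda>(x,v). tor_proj (x + v)))" by simp
    fix A assume "A \<in> sets (distr gam borel (\<lambda>(x,v). tor_proj (x + v)))"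
    then have A[measurable]: "A \<in> sets (borel :: (real^'n) measure)" by simp
    have im: "(\<lambda>p. indicator A ((\<lambda>(x,v). tor_proj (x + v)) p)) \<in> borel_measurable (borel :: ((real^'n) \<times> (real^'n)) measure)"
      using measurable_comp[OF tpadd_meas, of "indicator A :: _ \<Rightarrow> ennreal"] by (simp add: o_def)
    have im2: "(\<lambda>p. indicator A ((\<lambda>(x,v). tor_proj (x + v)) p)) \<in> borel_measurable gt"
      using im unfolding measurable_cong_sets[OF sg refl] .
    have "emeasure (distr gam borel (\<lambda>(x,v). tor_proj (x + v))) A = (\<integral>\<^sup>+p. indicator A ((\<lambda>(x,v). tor_proj (x + v)) p) \<partial>gam)"
      by (rule emeasure_distr_nn[OF tpaddgam A])
    also have "\<dots> = (\<integral>\<^sup>+p. indicator A ((\<lambda>(x,v). tor_proj (x + v)) p) \<partial>gt)"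
      by (rule C2[OF im im2]) (simp add: tp_shift)
    also have "\<dots> = emeasure (distr gt borel (\<lambda>(x,v). tor_proj (x + v))) A"
      by (rule emeasure_distr_nn[OF tpaddg A, symmetric])
    finally show "emeasure (distr gam borel (\<lambda>(x,v). tor_proj (x + v))) A = emeasure (distr gt borel (\<lambda>(x,v). tor_proj (x + v))) A" .
  qed
  finally show ?thesis .
qed

lemma gam_v2: "(\<integral>\<^sup>+p. ennreal ((\<lambda>(x,v). norm v ^ 2) p) \<partial>gam) = (\<integral>\<^sup>+p. ennreal ((\<lambda>(x,v). norm v ^ 2) p) \<partial>gt)"
proof -
  have m: "(\<lambda>p. ennreal ((\<lambda>(x,v). norm v ^ 2) p)) \<in> borel_measurable (borel :: ((real^'n) \<times> (real^'n)) measure)"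
    using norm2_meas by measurable
  show ?thesis by (rule C2[OF m]) (simp_all add: measurable_cong_sets[OF sg refl] m)
qed


lemma gam_iv:
  assumes iv: "integrable gt (\<lambda>(x,v). norm v ^ 2)"
  shows "integrable gam (\<lambda>(x,v). norm v ^ 2)" "(\<integral>(x,v). norm v ^ 2 \<partial>gam) = (\<integral>(x,v). norm v ^ 2 \<partial>gt)"
proof -
  have m1: "(\<lambda>(x,v). norm (v::real^'n) ^ 2) \<in> borel_measurable gam"
    unfolding measurable_cong_sets[OF sgam refl] by (rule norm2_meas)
  have m2: "(\<lambda>(x,v). norm (v::real^'n) ^ 2) \<in> borel_measurable gt"
    unfolding measurable_cong_sets[OF sg refl] by (rule norm2_meas)
  have fin: "(\<integral>\<^sup>+p. ennreal ((\<lambda>(x,v). norm v ^ 2) p) \<partial>gt) < \<infinity>"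
    using integrableD(2)[OF iv] by (simp add: top.not_eq_extremum)
  show "integrable gam (\<lambda>(x,v). norm v ^ 2)"
  proof (rule integrableI_bounded[OF m1])
    have "(\<integral>\<^sup>+p. ennreal (norm ((\<lambda>(x,v). norm v ^ 2) p)) \<partial>gam) = (\<integral>\<^sup>+p. ennreal ((\<lambda>(x,v). norm v ^ 2) p) \<partial>gam)"
      by (intro nn_integral_cong) (simp add: case_prod_unfold)
    also have "\<dots> = (\<integral>\<^sup>+p. ennreal ((\<lambda>(x,v). norm v ^ 2) p) \<partial>gt)" by (rule gam_v2)
    finally show "(\<integral>\<^sup>+p. ennreal (norm ((\<lambda>(x,v). norm v ^ 2) p)) \<partial>gam) < \<infinity>" using fin by simp
  qed
  show "(\<integral>(x,v). norm v ^ 2 \<partial>gam) = (\<integral>(x,v). norm v ^ 2 \<partial>gt)"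
  proof -
    have "(\<integral>(x,v). norm v ^ 2 \<partial>gam) = enn2real (\<integral>\<^sup>+p. ennreal ((\<lambda>(x,v). norm v ^ 2) p) \<partial>gam)"
      by (rule integral_eq_nn_integral[OF m1]) (simp add: case_prod_unfold)
    also have "\<dots> = enn2real (\<integral>\<^sup>+p. ennreal ((\<lambda>(x,v). norm v ^ 2) p) \<partial>gt)" by (simp only: gam_v2)
    also have "\<dots> = (\<integral>(x,v). norm v ^ 2 \<partial>gt)"
      by (rule integral_eq_nn_integral[OF m2, symmetric]) (simp add: case_prod_unfold)
    finally show ?thesis .
  qed
qed

lemma gam_P2:
  assumes iv: "integrable gt (\<lambda>(x,v). norm v ^ 2)"
  shows "P2 (distr gam borel (\<lambda>(x,v). x + v))"
  unfolding P2_def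
proof (intro conjI)
  show "prob_space (distr gam borel (\<lambda>(x,v). x + v))" by (rule prob_space.prob_space_distr[OF gam_prob addgam])
  show "sets (distr gam borel (\<lambda>(x,v). x + v)) = sets borel" by simp
  have nm: "(\<lambda>x. norm (x::real^'n) ^ 2) \<in> borel_measurable borel" by measurable
  have m: "(\<lambda>p. norm ((\<lambda>(x,v). x + v) p) ^ 2) \<in> borel_measurable gam"
    using measurable_comp[OF addgam nm] by (simp add: o_def)
  have "integrable gam (\<lambda>p. norm ((\<lambda>(x,v). x + v) p) ^ 2)"
  proof (rule integrableI_bounded[OF m])
    have a1[measurable]: "(\<lambda>x. ennreal (norm (x::real^'n) ^ 2)) \<in> borel_measurable borel" by measurable
    have a2: "(\<lambda>p. ennreal (norm (fst p :: real^'n) ^ 2)) \<in> borel_measurable gam"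
      using measurable_comp[OF fstgam a1] by (simp add: o_def)
    have a3: "(\<lambda>p. ennreal (norm (snd p :: real^'n) ^ 2)) \<in> borel_measurable gam"
      unfolding measurable_cong_sets[OF sgam refl] borel_prod[symmetric] by measurable
    have "(\<integral>\<^sup>+p. ennreal (norm (norm ((\<lambda>(x,v). x + v) p) ^ 2)) \<partial>gam)
        \<le> (\<integral>\<^sup>+p. 2 * ennreal (norm (fst p) ^ 2) + 2 * ennreal (norm (snd p) ^ 2) \<partial>gam)"
    proof (intro nn_integral_mono)
      fix p :: "(real^'n) \<times> (real^'n)"
      have "ennreal (norm (norm ((\<lambda>(x,v). x + v) p) ^ 2)) = ennreal (norm (fst p + snd p) ^ 2)"
        by (simp add: case_prod_unfold)
      also have "\<dots> \<le> ennreal (2 * norm (fst p) ^ 2 + 2 * norm (snd p) ^ 2)"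
        by (rule ennreal_leI) (rule sq_sum_le)
      also have "\<dots> = 2 * ennreal (norm (fst p) ^ 2) + 2 * ennreal (norm (snd p) ^ 2)"
        by (simp add: ennreal_plus ennreal_mult)
      finally show "ennreal (norm (norm ((\<lambda>(x,v). x + v) p) ^ 2)) \<le> 2 * ennreal (norm (fst p) ^ 2) + 2 * ennreal (norm (snd p) ^ 2)" .
    qed
    also have "\<dots> = 2 * (\<integral>\<^sup>+p. ennreal (norm (fst p) ^ 2) \<partial>gam) + 2 * (\<integral>\<^sup>+p. ennreal (norm (snd p) ^ 2) \<partial>gam)"
      using a2 a3 by (simp add: nn_integral_add nn_integral_cmult)
    also have "(\<integral>\<^sup>+p. ennreal (norm (fst p) ^ 2) \<partial>gam) = (\<integral>\<^sup>+x. ennreal (norm x ^ 2) \<partial>\<mu>)"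
      by (rule C1) simp
    also have "(\<integral>\<^sup>+p. ennreal (norm (snd p) ^ 2) \<partial>gam) = (\<integral>\<^sup>+p. ennreal ((\<lambda>(x,v). norm v ^ 2) p) \<partial>gt)"
      using gam_v2 by (simp add: case_prod_unfold)
    also have "2 * (\<integral>\<^sup>+x. ennreal (norm x ^ 2) \<partial>\<mu>) + 2 * (\<integral>\<^sup>+p. ennreal ((\<lambda>(x,v). norm v ^ 2) p) \<partial>gt) < \<infinity>"
    proof -
      have "(\<integral>\<^sup>+x. ennreal (norm x ^ 2) \<partial>\<mu>) < \<infinity>"
        using integrableD(2)[of \<mu> "\<lambda>x. norm x ^ 2"] P by (simp add: P2_def top.not_eq_extremum)
      moreover have "(\<integral>\<^sup>+p. ennreal ((\<lambda>(x,v). norm v ^ 2) p) \<partial>gt) < \<infinity>"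
        using integrableD(2)[OF iv] by (simp add: top.not_eq_extremum)
      ultimately show ?thesis by (simp add: ennreal_mult_less_top ennreal_add_less_top)
    qed
    finally show "(\<integral>\<^sup>+p. ennreal (norm (norm ((\<lambda>(x,v). x + v) p) ^ 2)) \<partial>gam) < \<infinity>" .
  qed
  then show "integrable (distr gam borel (\<lambda>(x,v). x + v)) (\<lambda>x. norm x ^ 2)"
    by (subst integrable_distr_eq[OF addgam nm])
qed

lemma gam_Psi:
  assumes iv: "integrable gt (\<lambda>(x,v). norm v ^ 2)"
  shows "gam \<in> Psi_R \<mu> (distr gam borel (\<lambda>(x,v). x + v))"
  unfolding Psi_R_def mem_Collect_eq using gam_prob sgam gam_iv(1)[OF iv] gam_fst by blast


lemma gam_f_int:
  fixes \<xi> :: "real^'n \<Rightarrow> real^'n"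
  assumes \<xi>m[measurable]: "\<xi> \<in> borel_measurable borel" and i\<xi>: "integrable \<mu> (\<lambda>x. norm (\<xi> x) ^ 2)"
    and iv: "integrable gt (\<lambda>(x,v). norm v ^ 2)"
  shows "integrable gam (\<lambda>(x,v). \<xi> x \<bullet> v)"
proof (rule integrableI_bounded)
  show "(\<lambda>(x,v). \<xi> x \<bullet> v) \<in> borel_measurable gam"
    unfolding measurable_cong_sets[OF sgam refl] by (rule inner_meas[OF \<xi>m])
  have a1[measurable]: "(\<lambda>x. ennreal (norm (\<xi> x) ^ 2)) \<in> borel_measurable borel" by measurable
  have a2: "(\<lambda>p. ennreal (norm (\<xi> (fst p)) ^ 2)) \<in> borel_measurable gam"
    using measurable_comp[OF fstgam a1] by (simp add: o_def)
  have a3: "(\<lambda>p. ennreal (norm (snd p :: real^'n) ^ 2)) \<in> borel_measurable gam"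
    unfolding measurable_cong_sets[OF sgam refl] borel_prod[symmetric] by measurable
  have "(\<integral>\<^sup>+p. ennreal (norm ((\<lambda>(x,v). \<xi> x \<bullet> v) p)) \<partial>gam)
      \<le> (\<integral>\<^sup>+p. ennreal (norm (\<xi> (fst p)) ^ 2) + ennreal (norm (snd p) ^ 2) \<partial>gam)"
  proof (intro nn_integral_mono)
    fix p :: "(real^'n) \<times> (real^'n)"
    have "ennreal (norm ((\<lambda>(x,v). \<xi> x \<bullet> v) p)) = ennreal \<bar>\<xi> (fst p) \<bullet> snd p\<bar>"
      by (simp add: case_prod_unfold)
    also have "\<dots> \<le> ennreal (norm (\<xi> (fst p)) ^ 2 + norm (snd p) ^ 2)"
      by (rule ennreal_leI) (rule inner_le_sq)
    also have "\<dots> = ennreal (norm (\<xi> (fst p)) ^ 2) + ennreal (norm (snd p) ^ 2)"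
      by (simp add: ennreal_plus)
    finally show "ennreal (norm ((\<lambda>(x,v). \<xi> x \<bullet> v) p)) \<le> ennreal (norm (\<xi> (fst p)) ^ 2) + ennreal (norm (snd p) ^ 2)" .
  qed
  also have "\<dots> = (\<integral>\<^sup>+p. ennreal (norm (\<xi> (fst p)) ^ 2) \<partial>gam) + (\<integral>\<^sup>+p. ennreal (norm (snd p) ^ 2) \<partial>gam)"
    using a2 a3 by (simp add: nn_integral_add)
  also have "(\<integral>\<^sup>+p. ennreal (norm (\<xi> (fst p)) ^ 2) \<partial>gam) = (\<integral>\<^sup>+x. ennreal (norm (\<xi> x) ^ 2) \<partial>\<mu>)"
    by (rule C1) simp
  also have "(\<integral>\<^sup>+p. ennreal (norm (snd p) ^ 2) \<partial>gam) = (\<integral>\<^sup>+p. ennreal ((\<lambda>(x,v). norm v ^ 2) p) \<partial>gt)"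
    using gam_v2 by (simp add: case_prod_unfold)
  also have "(\<integral>\<^sup>+x. ennreal (norm (\<xi> x) ^ 2) \<partial>\<mu>) + (\<integral>\<^sup>+p. ennreal ((\<lambda>(x,v). norm v ^ 2) p) \<partial>gt) < \<infinity>"
  proof -
    have "(\<integral>\<^sup>+x. ennreal (norm (\<xi> x) ^ 2) \<partial>\<mu>) < \<infinity>"
      using integrableD(2)[OF i\<xi>] by (simp add: top.not_eq_extremum)
    moreover have "(\<integral>\<^sup>+p. ennreal ((\<lambda>(x,v). norm v ^ 2) p) \<partial>gt) < \<infinity>"
      using integrableD(2)[OF iv] by (simp add: top.not_eq_extremum)
    ultimately show ?thesis by (simp add: ennreal_add_less_top)
  qed
  finally show "(\<integral>\<^sup>+p. ennreal (norm ((\<lambda>(x,v). \<xi> x \<bullet> v) p)) \<partial>gam) < \<infinity>" .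
qed

lemma lin:
  fixes \<xi> :: "real^'n \<Rightarrow> real^'n"
  assumes \<xi>m[measurable]: "\<xi> \<in> borel_measurable borel" and i\<xi>: "integrable \<mu> (\<lambda>x. norm (\<xi> x) ^ 2)"
    and iv: "integrable gt (\<lambda>(x,v). norm v ^ 2)"
  shows "(\<integral>(x,v). \<xi> x \<bullet> v \<partial>gam) = (\<integral>(x,v). xi' \<xi> x \<bullet> v \<partial>gt)"
proof -
  define f where "f = (\<lambda>(x::real^'n, v::real^'n). \<xi> x \<bullet> v)"
  have fm: "f \<in> borel_measurable borel" unfolding f_def by (rule inner_meas[OF \<xi>m])
  define R where "R = (\<lambda>(z::'n\<Rightarrow>int, w::(real^'n)\<times>(real^'n)). Wr z (fst w))"
  have Rm: "R \<in> borel_measurable (count_space UNIV \<Otimes>\<^sub>M gt)"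
    unfolding R_def
    by (rule measurable_pair_measure_countable1) (auto intro!: countableI_type simp: measurable_cong_sets[OF sg refl])
  have Gam_eq: "Gam = density (count_space UNIV \<Otimes>\<^sub>M gt) (\<lambda>p. ennreal (R p))"
    unfolding Gam_def R_def by (simp add: W_eq case_prod_unfold)
  have fPm: "(\<lambda>p. f (Phi p)) \<in> borel_measurable (count_space UNIV \<Otimes>\<^sub>M gt)"
    using measurable_comp[OF PhiP fm] by (simp add: o_def)
  have Rnn: "AE p in count_space UNIV \<Otimes>\<^sub>M gt. 0 \<le> R p" by (simp add: R_def case_prod_unfold Wr_nonneg)
  have "integrable gam f" using gam_f_int[OF \<xi>m i\<xi> iv] by (simp add: f_def)
  then have "integrable Gam (\<lambda>p. f (Phi p))" unfolding gam_def by (subst (asm) integrable_distr_eq[OF PhiM fm])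
  then have intP: "integrable (count_space UNIV \<Otimes>\<^sub>M gt) (\<lambda>p. R p *\<^sub>R f (Phi p))"
    unfolding Gam_eq by (subst (asm) integrable_density[OF fPm Rm Rnn])
  define F where "F z w = R (z, w) *\<^sub>R f (Phi (z, w))" for z w
  have intP': "integrable (count_space UNIV \<Otimes>\<^sub>M gt) (\<lambda>(z,w). F z w)"
    using intP by (simp add: F_def case_prod_unfold)
  have "(\<integral>(x,v). \<xi> x \<bullet> v \<partial>gam) = integral\<^sup>L gam f" by (simp add: f_def)
  also have "\<dots> = (\<integral>p. f (Phi p) \<partial>Gam)" unfolding gam_def by (rule integral_distr[OF PhiM fm])
  also have "\<dots> = (\<integral>p. R p *\<^sub>R f (Phi p) \<partial>(count_space UNIV \<Otimes>\<^sub>M gt))"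
    unfolding Gam_eq by (rule integral_density[OF fPm Rm Rnn])
  also have "\<dots> = (\<integral>(z,w). F z w \<partial>(count_space UNIV \<Otimes>\<^sub>M gt))" by (simp add: F_def case_prod_unfold)
  also have "\<dots> = (\<integral>w. (\<integral>z. F z w \<partial>count_space UNIV) \<partial>gt)"
    by (rule pair_sigma_finite.integral_snd[OF PSF intP', symmetric])
  also have "\<dots> = (\<integral>w. xi' \<xi> (fst w) \<bullet> snd w \<partial>gt)"
  proof (rule integral_cong_AE)
    show "(\<lambda>w. \<integral>z. F z w \<partial>count_space UNIV) \<in> borel_measurable gt"
    proof -
      have Fm: "F z \<in> borel_measurable gt" for z
      proof -
        have "F z = (\<lambda>w. Wr z (fst w) * (\<xi> (fst w + zv z) \<bullet> snd w))"
          by (auto simp: F_def R_def f_def Phi_def fun_eq_iff)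
        also have "\<dots> \<in> borel_measurable gt"
          unfolding measurable_cong_sets[OF sg refl] borel_prod[symmetric] by measurable
        finally show ?thesis .
      qed
      show ?thesis using meas_count_L[where f=F and M=gt, OF Fm] .
    qed
    show "(\<lambda>w. xi' \<xi> (fst w) \<bullet> snd w) \<in> borel_measurable gt"
    proof -
      have [measurable]: "xi' \<xi> \<in> borel_measurable borel" by (rule xi'_meas[OF \<xi>m])
      have "(\<lambda>w. xi' \<xi> (fst w) \<bullet> snd w) \<in> borel_measurable (borel :: ((real^'n) \<times> (real^'n)) measure)"
        unfolding borel_prod[symmetric] by measurable
      then show ?thesis unfolding measurable_cong_sets[OF sg refl] .
    qed
    have "AE y in distr gt borel fst. integrable (count_space UNIV) (\<lambda>z. Wr z y *\<^sub>R \<xi> (y + zv z))"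
      by (subst fg) (rule AE_int[OF \<xi>m i\<xi>])
    then have "AE w in gt. integrable (count_space UNIV) (\<lambda>z. Wr z (fst w) *\<^sub>R \<xi> (fst w + zv z))"
      by (rule AE_distrD[OF fstg])
    then show "AE w in gt. (\<integral>z. F z w \<partial>count_space UNIV) = xi' \<xi> (fst w) \<bullet> snd w"
    proof eventually_elim
      case (elim w)
      have "(\<integral>z. F z w \<partial>count_space UNIV) = (\<integral>z. (Wr z (fst w) *\<^sub>R \<xi> (fst w + zv z)) \<bullet> snd w \<partial>count_space UNIV)"
        by (simp add: F_def R_def f_def Phi_def)
      also have "\<dots> = (\<integral>z. Wr z (fst w) *\<^sub>R \<xi> (fst w + zv z) \<partial>count_space UNIV) \<bullet> snd w"
        by (rule integral_inner_left) (rule elim)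
      finally show ?case by (simp add: xi'_def)
    qed
  qed
  also have "\<dots> = (\<integral>(x,v). xi' \<xi> x \<bullet> v \<partial>gt)" by (simp add: case_prod_unfold)
  finally show ?thesis .
qed

end


lemma part2:
  fixes G :: "(real^'n) measure \<Rightarrow> real"
  assumes sd: "strongly_diff_R (\<lambda>m. G (distr m borel tor_proj)) \<mu>"
  shows "strongly_diff_tor G (distr \<mu> borel tor_proj)"
proof -
  from sd have "\<exists>\<xi> k. \<xi> \<in> borel_measurable borel \<and> integrable \<mu> (\<lambda>x. norm (\<xi> x) ^ 2) \<and> k > 0 \<and>
        (\<forall>\<nu> \<gamma>. P2 \<nu> \<longrightarrow> \<gamma> \<in> Psi_R \<mu> \<nu> \<longrightarrow>
           \<bar>G (distr \<nu> borel tor_proj) - G (distr \<mu> borel tor_proj) - (\<integral>(x,v). \<xi> x \<bullet> v \<partial>\<gamma>)\<bar> \<le> k * (\<integral>(x,v). norm v ^ 2 \<partial>\<gamma>))"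
    unfolding strongly_diff_R_def by (rule conjunct2)
  then obtain \<xi> k where \<xi>m[measurable]: "\<xi> \<in> borel_measurable borel"
    and i\<xi>: "integrable \<mu> (\<lambda>x. norm (\<xi> x) ^ 2)" and k: "k > 0"
    and H0: "\<forall>\<nu> \<gamma>. P2 \<nu> \<longrightarrow> \<gamma> \<in> Psi_R \<mu> \<nu> \<longrightarrow>
           \<bar>G (distr \<nu> borel tor_proj) - G (distr \<mu> borel tor_proj) - (\<integral>(x,v). \<xi> x \<bullet> v \<partial>\<gamma>)\<bar> \<le> k * (\<integral>(x,v). norm v ^ 2 \<partial>\<gamma>)"
    by (elim exE conjE)
  note H = H0[rule_format]
  have tp: "tor_prob mt" unfolding mt_def by (rule tor_prob_distr[OF psM sM])
  have B: "\<bar>G \<nu>t - G mt - (\<integral>(x,v). xi' \<xi> x \<bullet> v \<partial>gt)\<bar> \<le> k * (\<integral>(x,v). norm v ^ 2 \<partial>gt)"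
    if t\<nu>: "tor_prob \<nu>t" and g: "gt \<in> Psi_tor mt \<nu>t" for \<nu>t gt
  proof -
    have psg: "prob_space gt" and sg: "sets gt = sets borel" and iv: "integrable gt (\<lambda>(x,v). norm v ^ 2)"
      and fg: "distr gt borel fst = mt" and ag: "distr gt borel (\<lambda>(x,v). tor_proj (x + v)) = \<nu>t"
      using g unfolding Psi_tor_def by blast+
    define \<nu> where "\<nu> = distr (gam gt) borel (\<lambda>(x,v). x + v)"
    have P\<nu>: "P2 \<nu>" unfolding \<nu>_def by (rule gam_P2[OF psg sg fg iv])
    have gP: "gam gt \<in> Psi_R \<mu> \<nu>" unfolding \<nu>_def by (rule gam_Psi[OF psg sg fg iv])
    have e1: "distr \<nu> borel tor_proj = \<nu>t" unfolding \<nu>_def using gam_tpadd[OF psg sg fg] ag by simp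
    have e2: "(\<integral>(x,v). \<xi> x \<bullet> v \<partial>gam gt) = (\<integral>(x,v). xi' \<xi> x \<bullet> v \<partial>gt)"
      by (rule lin[OF psg sg fg \<xi>m i\<xi> iv])
    have e3: "(\<integral>(x,v). norm v ^ 2 \<partial>gam gt) = (\<integral>(x,v). norm v ^ 2 \<partial>gt)"
      by (rule gam_iv(2)[OF psg sg fg iv])
    from H[OF P\<nu> gP] show ?thesis unfolding e1 e2 e3 mt_def[symmetric] .
  qed
  have m: "xi' \<xi> \<in> borel_measurable borel" by (rule xi'_meas[OF \<xi>m])
  have i: "integrable mt (\<lambda>y. norm (xi' \<xi> y) ^ 2)" by (rule xi'_L2[OF \<xi>m i\<xi>])
  show ?thesis unfolding mt_def[symmetric] strongly_diff_tor_def
    apply (rule conjI[OF tp])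
    apply (rule exI[of _ "xi' \<xi>"])
    apply (rule exI[of _ k])
    apply (intro conjI allI impI m i k)
    apply (erule B)
    apply assumption
    done
qed

end


theorem lemma1p2:
  fixes G :: "(real^'n) measure \<Rightarrow> real"
  shows "(\<forall>\<mu>t. strongly_diff_tor G \<mu>t \<longrightarrow>
            (\<forall>\<mu>. P2 \<mu> \<and> distr \<mu> borel tor_proj = \<mu>t \<longrightarrow>
                 strongly_diff_R (\<lambda>m. G (distr m borel tor_proj)) \<mu>))
       \<and> (\<forall>\<mu>. P2 \<mu> \<and> strongly_diff_R (\<lambda>m. G (distr m borel tor_proj)) \<mu> \<longrightarrow>
                 strongly_diff_tor G (distr \<mu> borel tor_proj))"
proof (intro conjI allI impI)
  fix \<mu>t and \<mu> :: "(real^'n) measure"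
  assume "strongly_diff_tor G \<mu>t" and "P2 \<mu> \<and> distr \<mu> borel tor_proj = \<mu>t"
  then show "strongly_diff_R (\<lambda>m. G (distr m borel tor_proj)) \<mu>" using part1 by blast
next
  fix \<mu> :: "(real^'n) measure"
  assume "P2 \<mu> \<and> strongly_diff_R (\<lambda>m. G (distr m borel tor_proj)) \<mu>"
  then show "strongly_diff_tor G (distr \<mu> borel tor_proj)" using part2 by blast
qed

end
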